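(* Let $H$ be a non-degenerate Hamiltonian of a $d$-dimensional quantum system, and consider a differentiable activation trajectory $S(E)$ in the region of the energy-entropy plane corresponding to full-rank passive states (so $\mathrm{d}S/\mathrm{d}E\le0$ along the trajectory, traversed in the direction of decreasing $E$ / increasing $S$). Then along this trajectory the asymptotic ergotropy $W_{\max}$ and the minimal $\beta$-athermality $\Delta S_{\max}$ are both monotonically non-decreasing functions of the geometric athermality $\mathcal A$, i.e. $\frac{\mathrm{d}\mathcal A}{\mathrm{d}W_{\max}}\ge0$ and $\frac{\mathrm{d}\mathcal A}{\mathrm{d}\Delta S_{\max}}\ge0$.
   Context: For $\beta\ge0$, $\gamma_\beta=e^{-\beta H}/\mathrm{tr}\,e^{-\beta H}$; $E(\sigma)=\mathrm{tr}[H\sigma]$, $S(\sigma)=-\mathrm{tr}[\sigma\log\sigma]$. For a point $(E,S)$: $W_{\max}(E,S)=E-E(\gamma_{\beta_{\max}})$ where $\beta_{\max}$ satisfies $S(\gamma_{\beta_{\max}})=S$, and $\Delta S_{\max}(E,S)=S(\gamma_{\beta_{\min}})-S$ where $\beta_{\min}$ satisfies $E(\gamma_{\beta_{\min}})=E$. A state is passive if $\mathrm{tr}(HU\rho U^\dagger)\ge\mathrm{tr}(H\rho)$ for all unitaries $U$; a full-rank passive state is $\rho=\sum_ip_i|e_i\rangle\langle e_i|$ in an eigenbasis $\{|e_i\rangle\}$ of $H=\sum_i\epsilon_i|e_i\rangle\langle e_i|$. Its $\epsilon$-$s$ ensemble is $\{(\epsilon_i,-\log p_i)\}\subset\mathbb{R}^2$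 and $A(\rho)$ is the area of its convex hull. The geometric athermality is $\mathcal A(E,S)=\inf\{A(\rho):\rho$ full-rank passive, $E(\rho)=E$, $S(\rho)=S\}$. An activation trajectory is a curve in the $(E,S)$-plane whose tangent $(u_E,u_S)$ satisfies $u_E\le0$, $u_S\ge0$ everywhere. *)

theory Defs
  imports "HOL-Analysis.Analysis"
begin

text \<open>A d-dimensional quantum system with Hamiltonian H = sum_i eps i |e_i><e_i|,
  i < d. All states relevant here (Gibbs states, passive states) are diagonal in the
  eigenbasis, so they are represented by their population vectors p :: nat => real
  on the index set {..<d}.\<close>

definition nondegenerate :: "nat \<Rightarrow> (nat \<Rightarrow> real) \<Rightarrow> bool" where
  "nondegenerate d eps \<longleftrightarrow> inj_on eps {..<d}"

definition energy :: "nat \<Rightarrow> (nat \<Rightarrow> real) \<Rightarrow> (nat \<Rightarrow> real) \<Rightarrow> real" where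
  "energy d eps p = (\<Sum>i<d. p i * eps i)"

definition entropy :: "nat \<Rightarrow> (nat \<Rightarrow> real) \<Rightarrow> real" where
  "entropy d p = - (\<Sum>i<d. p i * ln (p i))"

definition full_rank_passive :: "nat \<Rightarrow> (nat \<Rightarrow> real) \<Rightarrow> (nat \<Rightarrow> real) \<Rightarrow> bool" where
  "full_rank_passive d eps p \<longleftrightarrow>
     (\<forall>i<d. 0 < p i) \<and> (\<Sum>i<d. p i) = 1 \<and>
     (\<forall>i<d. \<forall>j<d. eps i < eps j \<longrightarrow> p j \<le> p i)"

definition gibbs :: "nat \<Rightarrow> (nat \<Rightarrow> real) \<Rightarrow> real \<Rightarrow> nat \<Rightarrow> real" where
  "gibbs d eps \<beta> i = exp (- \<beta> * eps i) / (\<Sum>j<d. exp (- \<beta> * eps j))"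

definition beta_max :: "nat \<Rightarrow> (nat \<Rightarrow> real) \<Rightarrow> real \<Rightarrow> real" where
  "beta_max d eps S = (THE \<beta>. 0 \<le> \<beta> \<and> entropy d (gibbs d eps \<beta>) = S)"

definition beta_min :: "nat \<Rightarrow> (nat \<Rightarrow> real) \<Rightarrow> real \<Rightarrow> real" where
  "beta_min d eps E = (THE \<beta>. 0 \<le> \<beta> \<and> energy d eps (gibbs d eps \<beta>) = E)"

definition W_max :: "nat \<Rightarrow> (nat \<Rightarrow> real) \<Rightarrow> real \<Rightarrow> real \<Rightarrow> real" where
  "W_max d eps E S = E - energy d eps (gibbs d eps (beta_max d eps S))"

definition Delta_S_max :: "nat \<Rightarrow> (nat \<Rightarrow> real) \<Rightarrow> real \<Rightarrow> real \<Rightarrow> real" where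
  "Delta_S_max d eps E S = entropy d (gibbs d eps (beta_min d eps E)) - S"

definition eps_s_ensemble :: "nat \<Rightarrow> (nat \<Rightarrow> real) \<Rightarrow> (nat \<Rightarrow> real) \<Rightarrow> (real \<times> real) set" where
  "eps_s_ensemble d eps p = (\<lambda>i. (eps i, - ln (p i))) ` {..<d}"

definition hull_area :: "nat \<Rightarrow> (nat \<Rightarrow> real) \<Rightarrow> (nat \<Rightarrow> real) \<Rightarrow> real" where
  "hull_area d eps p = measure lborel (convex hull (eps_s_ensemble d eps p))"

definition geom_athermality :: "nat \<Rightarrow> (nat \<Rightarrow> real) \<Rightarrow> real \<Rightarrow> real \<Rightarrow> real" where
  "geom_athermality d eps E S =
     Inf {hull_area d eps p | p. full_rank_passive d eps p \<and>
                                 energy d eps p = E \<and> entropy d p = S}"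

definition passive_region :: "nat \<Rightarrow> (nat \<Rightarrow> real) \<Rightarrow> (real \<times> real) set" where
  "passive_region d eps =
     {(energy d eps p, entropy d p) | p. full_rank_passive d eps p}"

definition activation_trajectory ::
  "nat \<Rightarrow> (nat \<Rightarrow> real) \<Rightarrow> real \<Rightarrow> real \<Rightarrow> (real \<Rightarrow> real) \<Rightarrow> (real \<Rightarrow> real) \<Rightarrow> bool" where
  "activation_trajectory d eps a b Ef Sf \<longleftrightarrow>
     a < b \<and>
     (\<forall>t\<in>{a..b}. (Ef t, Sf t) \<in> passive_region d eps) \<and>
     (\<forall>t\<in>{a..b}. \<exists>uE uS. (Ef has_real_derivative uE) (at t within {a..b}) \<and>
                          (Sf has_real_derivative uS) (at t within {a..b}) \<and>
                          uE \<le> 0 \<and> 0 \<le> uS)"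

end

theory Submission
  imports Defs
begin

lemma cheb_exp_aux:
  fixes x y a :: "nat \<Rightarrow> real"
  defines "K \<equiv> \<lambda>i j. exp (y i + x j) - exp (x i + y j)"
  shows "2 * ((\<Sum>i<d. exp (y i) * a i) * (\<Sum>j<d. exp (x j)) - (\<Sum>i<d. exp (x i) * a i) * (\<Sum>j<d. exp (y j)))
     = (\<Sum>i<d. \<Sum>j<d. K i j * (a i - a j))"
proof -
  have 1: "(\<Sum>i<d. exp (y i) * a i) * (\<Sum>j<d. exp (x j)) - (\<Sum>i<d. exp (x i) * a i) * (\<Sum>j<d. exp (y j))
      = (\<Sum>i<d. \<Sum>j<d. K i j * a i)"
  proof -
    have a: "(\<Sum>i<d. exp (y i) * a i) * (\<Sum>j<d. exp (x j)) = (\<Sum>i<d. \<Sum>j<d. exp (y i) * a i * exp (x j))"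
      by (rule sum_product)
    have b: "(\<Sum>i<d. exp (x i) * a i) * (\<Sum>j<d. exp (y j)) = (\<Sum>i<d. \<Sum>j<d. exp (x i) * a i * exp (y j))"
      by (rule sum_product)
    show ?thesis unfolding a b sum_subtractf[symmetric] by (intro sum.cong refl) (simp add: K_def exp_add algebra_simps)
  qed
  have 2: "(\<Sum>i<d. \<Sum>j<d. K i j * a i) = (\<Sum>j<d. \<Sum>i<d. K i j * a i)"
    by (rule sum.swap)
  have 3: "(\<Sum>j<d. \<Sum>i<d. K i j * a i) = - (\<Sum>i<d. \<Sum>j<d. K i j * a j)"
    by (simp add: K_def sum_negf[symmetric] algebra_simps add.commute)
  show ?thesis using 1 2 3
    by (simp add: sum_subtractf algebra_simps sum.distrib)
qed

lemma K_term_nonneg: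
  fixes x y a :: "nat \<Rightarrow> real"
  assumes "0 \<le> ((y i - x i) - (y j - x j)) * (a i - a j)"
  shows "0 \<le> (exp (y i + x j) - exp (x i + y j)) * (a i - a j)"
proof (cases "(y i - x i) - (y j - x j)" "0::real" rule: linorder_cases)
  case less
  then have "a i - a j \<le> 0" using assms by (simp add: zero_le_mult_iff)
  moreover have "exp (y i + x j) - exp (x i + y j) \<le> 0" using less by simp
  ultimately show ?thesis by (simp add: mult_nonpos_nonpos)
next
  case equal
  then have "y i + x j = x i + y j" by simp
  then show ?thesis by simp
next
  case greater
  then have "a i - a j \<ge> 0" using assms by (simp add: zero_le_mult_iff)
  moreover have "exp (y i + x j) - exp (x i + y j) \<ge> 0" using greater by simp
  ultimately show ?thesis by simp
qed

lemma K_term_pos: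
  fixes x y a :: "nat \<Rightarrow> real"
  assumes "0 < ((y i - x i) - (y j - x j)) * (a i - a j)"
  shows "0 < (exp (y i + x j) - exp (x i + y j)) * (a i - a j)"
proof (cases "(y i - x i) - (y j - x j)" "0::real" rule: linorder_cases)
  case less
  then have "a i - a j < 0" using assms by (simp add: zero_less_mult_iff)
  moreover have "exp (y i + x j) - exp (x i + y j) < 0" using less by simp
  ultimately show ?thesis by (simp add: mult_neg_neg)
next
  case equal
  then show ?thesis using assms by simp
next
  case greater
  then have "a i - a j > 0" using assms by (simp add: zero_less_mult_iff)
  moreover have "exp (y i + x j) - exp (x i + y j) > 0" using greater by simp
  ultimately show ?thesis by simp
qed

lemma cheb_exp:
  fixes x y a :: "nat \<Rightarrow> real"
  assumes "\<forall>i<d. \<forall>j<d. 0 \<le> ((y i - x i) - (y j - x j)) * (a i - a j)"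
  shows "(\<Sum>i<d. exp (x i) * a i) / (\<Sum>i<d. exp (x i)) \<le> (\<Sum>i<d. exp (y i) * a i) / (\<Sum>i<d. exp (y i))"
proof (cases "d = 0")
  case True then show ?thesis by simp
next
  case False
  have U: "0 < (\<Sum>i<d. exp (x i))" using False by (intro sum_pos) auto
  have V: "0 < (\<Sum>i<d. exp (y i))" using False by (intro sum_pos) auto
  have "0 \<le> (\<Sum>i<d. \<Sum>j<d. (exp (y i + x j) - exp (x i + y j)) * (a i - a j))"
    using assms by (intro sum_nonneg K_term_nonneg) auto
  then have "(\<Sum>i<d. exp (x i) * a i) * (\<Sum>j<d. exp (y j)) \<le> (\<Sum>i<d. exp (y i) * a i) * (\<Sum>j<d. exp (x j))"
    using cheb_exp_aux[of y a d x] by simp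
  then show ?thesis using U V by (simp add: divide_simps mult.commute)
qed

lemma cheb_exp_strict:
  fixes x y a :: "nat \<Rightarrow> real"
  assumes "\<forall>i<d. \<forall>j<d. 0 \<le> ((y i - x i) - (y j - x j)) * (a i - a j)"
    and "ia < d" "ja < d" "0 < ((y ia - x ia) - (y ja - x ja)) * (a ia - a ja)"
  shows "(\<Sum>i<d. exp (x i) * a i) / (\<Sum>i<d. exp (x i)) < (\<Sum>i<d. exp (y i) * a i) / (\<Sum>i<d. exp (y i))"
proof -
  have False': "d \<noteq> 0" using assms by auto
  have U: "0 < (\<Sum>i<d. exp (x i))" using False' by (intro sum_pos) auto
  have V: "0 < (\<Sum>i<d. exp (y i))" using False' by (intro sum_pos) auto
  have P: "0 < (\<Sum>j<d. (exp (y ia + x j) - exp (x ia + y j)) * (a ia - a j))"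
  proof (rule sum_pos2[where i=ja])
    show "0 < (exp (y ia + x ja) - exp (x ia + y ja)) * (a ia - a ja)"
      using assms by (intro K_term_pos) auto
    show "0 \<le> (exp (y ia + x j) - exp (x ia + y j)) * (a ia - a j)" if "j \<in> {..<d}" for j
      using assms that by (intro K_term_nonneg) auto
  qed (use assms in auto)
  have N: "0 \<le> (\<Sum>j<d. (exp (y i + x j) - exp (x i + y j)) * (a i - a j))" if "i < d" for i
    using assms that by (auto intro!: sum_nonneg K_term_nonneg)
  have "0 < (\<Sum>i<d. \<Sum>j<d. (exp (y i + x j) - exp (x i + y j)) * (a i - a j))"
    by (rule sum_pos2[where i=ia]) (use P N assms in auto)
  then have "(\<Sum>i<d. exp (x i) * a i) * (\<Sum>j<d. exp (y j)) < (\<Sum>i<d. exp (y i) * a i) * (\<Sum>j<d. exp (x j))"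
    using cheb_exp_aux[of y a d x] by simp
  then show ?thesis using U V by (simp add: divide_simps mult.commute)
qed

definition Zf :: "nat \<Rightarrow> (nat \<Rightarrow> real) \<Rightarrow> (nat \<Rightarrow> real) \<Rightarrow> real \<Rightarrow> real \<Rightarrow> real" where
  "Zf d eps p l m = (\<Sum>j<d. exp (l * ln (p j) - m * eps j))"

definition fam :: "nat \<Rightarrow> (nat \<Rightarrow> real) \<Rightarrow> (nat \<Rightarrow> real) \<Rightarrow> real \<Rightarrow> real \<Rightarrow> nat \<Rightarrow> real" where
  "fam d eps p l m i = exp (l * ln (p i) - m * eps i) / Zf d eps p l m"

lemma Zf_pos: "0 < d \<Longrightarrow> 0 < Zf d eps p l m"
  unfolding Zf_def by (intro sum_pos) auto

lemma fam_pos: "0 < d \<Longrightarrow> 0 < fam d eps p l m i"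
  unfolding fam_def using Zf_pos by auto

lemma fam_sum: "0 < d \<Longrightarrow> (\<Sum>i<d. fam d eps p l m i) = 1"
  unfolding fam_def using Zf_pos[of d eps p l m]
  by (simp add: sum_divide_distrib[symmetric] Zf_def)

lemma ln_fam: "0 < d \<Longrightarrow> ln (fam d eps p l m i) = l * ln (p i) - m * eps i - ln (Zf d eps p l m)"
  unfolding fam_def using Zf_pos[of d eps p l m] by (simp add: ln_div)

lemma energy_fam: "energy d eps (fam d eps p l m) =
   (\<Sum>i<d. exp (l * ln (p i) - m * eps i) * eps i) / (\<Sum>i<d. exp (l * ln (p i) - m * eps i))"
  unfolding energy_def fam_def Zf_def by (simp add: sum_divide_distrib[symmetric])

lemma entropy_fam: assumes "0 < d"
  shows "entropy d (fam d eps p l m) = m * energy d eps (fam d eps p l m)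
     - l * (\<Sum>i<d. fam d eps p l m i * ln (p i)) + ln (Zf d eps p l m)"
proof -
  have "entropy d (fam d eps p l m) = - (\<Sum>i<d. fam d eps p l m i * (l * ln (p i) - m * eps i - ln (Zf d eps p l m)))"
    unfolding entropy_def using ln_fam[OF assms] by simp
  also have "\<dots> = m * (\<Sum>i<d. fam d eps p l m i * eps i) - l * (\<Sum>i<d. fam d eps p l m i * ln (p i))
      + ln (Zf d eps p l m) * (\<Sum>i<d. fam d eps p l m i)"
    by (simp add: algebra_simps sum_subtractf sum_distrib_left sum_distrib_right sum_negf sum.distrib)
  finally show ?thesis using fam_sum[OF assms] by (simp add: energy_def mult_ac)
qed

lemma gibbs_fam: "gibbs d eps b = fam d eps p 0 b"
  unfolding gibbs_def fam_def Zf_def by (rule ext) simp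

lemma fam_1_0: assumes "\<forall>i<d. 0 < p i" "(\<Sum>i<d. p i) = 1" "i < d"
  shows "fam d eps p 1 0 i = p i"
proof -
  have "Zf d eps p 1 0 = 1" unfolding Zf_def using assms by simp
  then show ?thesis unfolding fam_def using assms by simp
qed

lemma fam_1_0_eq: assumes "\<forall>i<d. 0 < p i" "(\<Sum>i<d. p i) = 1"
  shows "energy d eps (fam d eps p 1 0) = energy d eps p" "entropy d (fam d eps p 1 0) = entropy d p"
  unfolding energy_def entropy_def using fam_1_0[OF assms] by simp_all

lemma fam_passive:
  assumes "full_rank_passive d eps p" "0 \<le> l" "0 \<le> m"
  shows "full_rank_passive d eps (fam d eps p l m)"
proof -
  have d: "0 < d" using assms(1) unfolding full_rank_passive_def by (cases d) auto
  have p: "\<forall>i<d. 0 < p i" using assms(1) unfolding full_rank_passive_def by auto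
  have "fam d eps p l m j \<le> fam d eps p l m i" if "i < d" "j < d" "eps i < eps j" for i j
  proof -
    have "p j \<le> p i" using assms(1) that unfolding full_rank_passive_def by auto
    then have "ln (p j) \<le> ln (p i)" using p that by simp
    then have "l * ln (p j) - m * eps j \<le> l * ln (p i) - m * eps i"
      using assms(2,3) that by (intro diff_mono mult_left_mono) auto
    then show ?thesis unfolding fam_def using Zf_pos[OF d, of eps p l m]
      by (intro divide_right_mono) auto
  qed
  then show ?thesis unfolding full_rank_passive_def using fam_pos[OF d] fam_sum[OF d] by auto
qed

lemma energy_fam_mono_m:
  assumes "m1 \<le> m2"
  shows "energy d eps (fam d eps p l m2) \<le> energy d eps (fam d eps p l m1)"
  unfolding energy_fam
proof (rule cheb_exp)
  show "\<forall>i<d. \<forall>j<d. 0 \<le> (l * ln (p i) - m1 * eps i - (l * ln (p i) - m2 * eps i) -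
       (l * ln (p j) - m1 * eps j - (l * ln (p j) - m2 * eps j))) * (eps i - eps j)"
  proof (intro allI impI)
    fix i j
    have "(l * ln (p i) - m1 * eps i - (l * ln (p i) - m2 * eps i) -
       (l * ln (p j) - m1 * eps j - (l * ln (p j) - m2 * eps j))) * (eps i - eps j) = (m2 - m1) * (eps i - eps j)^2"
      by (simp add: algebra_simps power2_eq_square)
    then show "0 \<le> (l * ln (p i) - m1 * eps i - (l * ln (p i) - m2 * eps i) -
       (l * ln (p j) - m1 * eps j - (l * ln (p j) - m2 * eps j))) * (eps i - eps j)"
      using assms by simp
  qed
qed

lemma energy_fam_strict_m:
  assumes "m1 < m2" "2 \<le> d" "nondegenerate d eps"
  shows "energy d eps (fam d eps p l m2) < energy d eps (fam d eps p l m1)"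
  unfolding energy_fam
proof (rule cheb_exp_strict[where ia=0 and ja=1])
  have e: "(l * ln (p i) - m1 * eps i - (l * ln (p i) - m2 * eps i) -
       (l * ln (p j) - m1 * eps j - (l * ln (p j) - m2 * eps j))) * (eps i - eps j) = (m2 - m1) * (eps i - eps j)^2" for i j
    by (simp add: algebra_simps power2_eq_square)
  show "\<forall>i<d. \<forall>j<d. 0 \<le> (l * ln (p i) - m1 * eps i - (l * ln (p i) - m2 * eps i) -
       (l * ln (p j) - m1 * eps j - (l * ln (p j) - m2 * eps j))) * (eps i - eps j)"
    unfolding e using assms by simp
  have "eps 0 \<noteq> eps 1" using assms(2,3) unfolding nondegenerate_def inj_on_def by fastforce
  then show "0 < (l * ln (p 0) - m1 * eps 0 - (l * ln (p 0) - m2 * eps 0) -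
       (l * ln (p 1) - m1 * eps 1 - (l * ln (p 1) - m2 * eps 1))) * (eps 0 - eps 1)"
    unfolding e using assms by simp
qed (use assms in auto)

lemma passive_ln_order:
  assumes "full_rank_passive d eps p" "i < d" "j < d"
  shows "(ln (p i) - ln (p j)) * (eps i - eps j) \<le> 0"
proof -
  have p: "0 < p i" "0 < p j" using assms unfolding full_rank_passive_def by auto
  consider "eps i < eps j" | "eps i = eps j" | "eps j < eps i" by linarith
  then show ?thesis
  proof cases
    case 1
    then have "p j \<le> p i" using assms unfolding full_rank_passive_def by auto
    then have "ln (p j) \<le> ln (p i)" using p by simp
    then show ?thesis using 1 by (simp add: mult_nonneg_nonpos)
  next
    case 2 then show ?thesis by simp
  next
    case 3
    then have "p i \<le> p j" using assms unfolding full_rank_passive_def by auto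
    then have "ln (p i) \<le> ln (p j)" using p by simp
    then show ?thesis using 3 by (simp add: mult_nonpos_nonneg)
  qed
qed

lemma energy_fam_mono_l:
  assumes "full_rank_passive d eps p" "l1 \<le> l2"
  shows "energy d eps (fam d eps p l2 0) \<le> energy d eps (fam d eps p l1 0)"
  unfolding energy_fam
proof (rule cheb_exp, intro allI impI)
  fix i j assume ij: "i < d" "j < d"
  have e: "(l1 * ln (p i) - 0 * eps i - (l2 * ln (p i) - 0 * eps i) -
       (l1 * ln (p j) - 0 * eps j - (l2 * ln (p j) - 0 * eps j))) * (eps i - eps j)
     = (l1 - l2) * ((ln (p i) - ln (p j)) * (eps i - eps j))"
    by (simp add: algebra_simps)
  show "0 \<le> (l1 * ln (p i) - 0 * eps i - (l2 * ln (p i) - 0 * eps i) -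
       (l1 * ln (p j) - 0 * eps j - (l2 * ln (p j) - 0 * eps j))) * (eps i - eps j)"
    unfolding e using passive_ln_order[OF assms(1) ij] assms(2)
    by (intro mult_nonpos_nonpos) auto
qed

lemma mean_lnp_mono:
  assumes "full_rank_passive d eps p" "0 \<le> m"
  shows "- (\<Sum>i<d. fam d eps p 1 m i * ln (p i)) \<le> entropy d p"
proof -
  have d: "0 < d" using assms(1) unfolding full_rank_passive_def by (cases d) auto
  have p: "\<forall>i<d. 0 < p i" "(\<Sum>i<d. p i) = 1" using assms(1) unfolding full_rank_passive_def by auto
  have "(\<Sum>i<d. exp (1 * ln (p i) - m * eps i) * (- ln (p i))) / (\<Sum>i<d. exp (1 * ln (p i) - m * eps i))
     \<le> (\<Sum>i<d. exp (1 * ln (p i) - 0 * eps i) * (- ln (p i))) / (\<Sum>i<d. exp (1 * ln (p i) - 0 * eps i))"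
  proof (rule cheb_exp, intro allI impI)
    fix i j assume ij: "i < d" "j < d"
    have e: "(1 * ln (p i) - 0 * eps i - (1 * ln (p i) - m * eps i) -
       (1 * ln (p j) - 0 * eps j - (1 * ln (p j) - m * eps j))) * (- ln (p i) - - ln (p j))
     = - m * ((ln (p i) - ln (p j)) * (eps i - eps j))"
      by (simp add: algebra_simps)
    show "0 \<le> (1 * ln (p i) - 0 * eps i - (1 * ln (p i) - m * eps i) -
       (1 * ln (p j) - 0 * eps j - (1 * ln (p j) - m * eps j))) * (- ln (p i) - - ln (p j))"
      unfolding e using passive_ln_order[OF assms(1) ij] assms(2)
      by (intro mult_nonpos_nonpos) auto
  qed
  also have "\<dots> = entropy d p"
    using p by (simp add: entropy_def sum_negf)
  finally show ?thesis
    unfolding fam_def Zf_def by (simp add: sum_divide_distrib[symmetric] sum_negf)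
qed

lemma sum_aff: fixes r a e :: "nat \<Rightarrow> real"
  shows "(\<Sum>i<d. r i * (a i - m * e i - L)) = (\<Sum>i<d. r i * a i) - m * (\<Sum>i<d. r i * e i) - L * (\<Sum>i<d. r i)"
proof -
  have "(\<Sum>i<d. r i * (a i - m * e i - L)) = (\<Sum>i<d. r i * a i - m * (r i * e i) - L * r i)"
    by (intro sum.cong) (simp_all add: algebra_simps)
  also have "\<dots> = (\<Sum>i<d. r i * a i) - m * (\<Sum>i<d. r i * e i) - L * (\<Sum>i<d. r i)"
    by (simp add: sum_subtractf sum_distrib_left)
  finally show ?thesis .
qed

lemma gibbs_term: fixes q r :: real assumes "0 < q" "0 < r" shows "q * ln r - q * ln q \<le> r - q"
proof -
  have "ln (r / q) \<le> r / q - 1" using assms by (intro ln_le_minus_one) auto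
  then have "q * ln (r / q) \<le> q * (r / q - 1)" using assms by (intro mult_left_mono) auto
  then show ?thesis using assms by (simp add: ln_div right_diff_distrib)
qed

lemma gibbs_term_strict: fixes q r :: real assumes "0 < q" "0 < r" "q \<noteq> r" shows "q * ln r - q * ln q < r - q"
proof -
  have le: "ln (r / q) \<le> r / q - 1" using assms by (intro ln_le_minus_one) auto
  have "ln (r / q) \<noteq> r / q - 1"
  proof
    assume "ln (r / q) = r / q - 1"
    then have "r / q = 1" using ln_eq_minus_one[of "r/q"] assms by auto
    then show False using assms by simp
  qed
  then have "ln (r / q) < r / q - 1" using le by simp
  then have "q * ln (r / q) < q * (r / q - 1)" using assms by (intro mult_strict_left_mono) auto
  then show ?thesis using assms by (simp add: ln_div right_diff_distrib)
qed

lemma gibbs_ineq: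
  assumes "\<forall>i<d. 0 < q i" "\<forall>i<d. 0 < r i" "(\<Sum>i<d. q i) = 1" "(\<Sum>i<d. r i) = 1"
  shows "entropy d q \<le> - (\<Sum>i<d. q i * ln (r i))"
proof -
  have "(\<Sum>i<d. q i * ln (r i) - q i * ln (q i)) \<le> (\<Sum>i<d. r i - q i)"
    using assms by (intro sum_mono gibbs_term) auto
  then show ?thesis using assms by (simp add: entropy_def sum_subtractf)
qed

lemma gibbs_ineq_strict:
  assumes "\<forall>i<d. 0 < q i" "\<forall>i<d. 0 < r i" "(\<Sum>i<d. q i) = 1" "(\<Sum>i<d. r i) = 1"
    and "k < d" "q k \<noteq> r k"
  shows "entropy d q < - (\<Sum>i<d. q i * ln (r i))"
proof -
  have "(\<Sum>i<d. q i * ln (r i) - q i * ln (q i)) < (\<Sum>i<d. r i - q i)"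
    using assms by (intro sum_strict_mono_ex1) (auto intro!: gibbs_term gibbs_term_strict)
  then show ?thesis using assms by (simp add: entropy_def sum_subtractf)
qed

lemma max_entropy:
  assumes "\<forall>i<d. 0 < r i" "(\<Sum>i<d. r i) = 1"
  shows "entropy d r \<le> m * energy d eps r + ln (Zf d eps p 0 m)"
proof -
  have d: "0 < d" using assms by (cases d) auto
  have "entropy d r \<le> - (\<Sum>i<d. r i * ln (fam d eps p 0 m i))"
    using assms fam_pos[OF d] fam_sum[OF d] by (intro gibbs_ineq) auto
  also have "\<dots> = m * energy d eps r + ln (Zf d eps p 0 m) * (\<Sum>i<d. r i)"
    unfolding ln_fam[OF d] energy_def sum_aff by simp
  finally show ?thesis using assms by simp
qed

lemma entropy_gibbs_fam: "0 < d \<Longrightarrow> entropy d (fam d eps p 0 m) = m * energy d eps (fam d eps p 0 m) + ln (Zf d eps p 0 m)"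
  using entropy_fam[of d eps p 0 m] by simp

lemma max_entropy_gibbs:
  assumes "\<forall>i<d. 0 < r i" "(\<Sum>i<d. r i) = 1" "energy d eps r = energy d eps (fam d eps p 0 m)"
  shows "entropy d r \<le> entropy d (fam d eps p 0 m)"
proof -
  have d: "0 < d" using assms by (cases d) auto
  show ?thesis using max_entropy[OF assms(1,2), of m eps p] assms(3) entropy_gibbs_fam[OF d] by simp
qed

lemma energy_differs_imp:
  assumes "energy d eps f \<noteq> energy d eps g"
  shows "\<exists>k<d. f k \<noteq> g k"
proof (rule ccontr)
  assume "\<not> (\<exists>k<d. f k \<noteq> g k)"
  then have "energy d eps f = energy d eps g" unfolding energy_def by (intro sum.cong) auto
  then show False using assms by simp
qed

lemma entropy_gibbs_strict:
  assumes "0 \<le> b1" "b1 < b2" "2 \<le> d" "nondegenerate d eps"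
  shows "entropy d (fam d eps p 0 b2) < entropy d (fam d eps p 0 b1)"
proof -
  have d: "0 < d" using assms by auto
  have E: "energy d eps (fam d eps p 0 b2) < energy d eps (fam d eps p 0 b1)"
    using energy_fam_strict_m[OF assms(2,3,4)] .
  then obtain k where k: "k < d" "fam d eps p 0 b2 k \<noteq> fam d eps p 0 b1 k"
    using energy_differs_imp[of d eps "fam d eps p 0 b2" "fam d eps p 0 b1"] by auto
  have "entropy d (fam d eps p 0 b2) < - (\<Sum>i<d. fam d eps p 0 b2 i * ln (fam d eps p 0 b1 i))"
    using fam_pos[OF d] fam_sum[OF d] k by (intro gibbs_ineq_strict) auto
  also have "\<dots> = b1 * energy d eps (fam d eps p 0 b2) + ln (Zf d eps p 0 b1) * (\<Sum>i<d. fam d eps p 0 b2 i)"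
    unfolding ln_fam[OF d] energy_def sum_aff by simp
  also have "\<dots> = b1 * energy d eps (fam d eps p 0 b2) + ln (Zf d eps p 0 b1)"
    using fam_sum[OF d] by simp
  also have "\<dots> \<le> b1 * energy d eps (fam d eps p 0 b1) + ln (Zf d eps p 0 b1)"
    using E assms(1) by (simp add: mult_left_mono)
  also have "\<dots> = entropy d (fam d eps p 0 b1)" using entropy_gibbs_fam[OF d] by simp
  finally show ?thesis .
qed

lemma entropy_cool_le:
  assumes "full_rank_passive d eps p" "0 \<le> m"
  shows "entropy d (fam d eps p 1 m) \<le> entropy d p"
proof -
  have d: "0 < d" using assms(1) unfolding full_rank_passive_def by (cases d) auto
  have p: "\<forall>i<d. 0 < p i" "(\<Sum>i<d. p i) = 1" using assms(1) unfolding full_rank_passive_def by auto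
  have "entropy d (fam d eps p 1 m) \<le> - (\<Sum>i<d. fam d eps p 1 m i * ln (p i))"
    using fam_pos[OF d] fam_sum[OF d] p by (intro gibbs_ineq) auto
  also have "\<dots> \<le> entropy d p" by (rule mean_lnp_mono[OF assms])
  finally show ?thesis .
qed

lemma lin_at_top: fixes \<delta> :: real assumes "0 < \<delta>" shows "filterlim (\<lambda>M. \<delta> * M) at_top at_top"
  using filterlim_tendsto_pos_mult_at_top[OF tendsto_const assms filterlim_ident] .

lemma lim_exp_neg: fixes \<delta> :: real assumes "0 < \<delta>"
  shows "((\<lambda>M. exp (- (\<delta> * M))) \<longlongrightarrow> 0) at_top"
proof -
  have "filterlim (\<lambda>M. - (\<delta> * M)) at_bot at_top"
    using lin_at_top[OF assms] filterlim_uminus_at_top by blast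
  then show ?thesis using exp_at_bot filterlim_compose by blast
qed

lemma lim_lin_exp_neg: fixes \<delta> :: real assumes "0 < \<delta>"
  shows "((\<lambda>M. (\<delta> * M) * exp (- (\<delta> * M))) \<longlongrightarrow> 0) at_top"
proof -
  have "((\<lambda>x::real. x ^ 1 / exp x) \<longlongrightarrow> 0) at_top" by (rule tendsto_power_div_exp_0)
  then have "((\<lambda>x::real. x * exp (- x)) \<longlongrightarrow> 0) at_top" by (simp add: exp_minus divide_inverse)
  then show ?thesis using filterlim_compose[OF _ lin_at_top[OF assms]] by blast
qed

lemma lim_exp_term: fixes \<delta> k :: real assumes "0 \<le> \<delta>"
  shows "((\<lambda>M. exp (k - M * \<delta>) * \<delta>) \<longlongrightarrow> 0) at_top"
proof (cases "\<delta> = 0")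
  case True then show ?thesis by simp
next
  case False
  then have "0 < \<delta>" using assms by simp
  have "((\<lambda>M. exp k * exp (- (\<delta> * M)) * \<delta>) \<longlongrightarrow> exp k * 0 * \<delta>) at_top"
    by (intro tendsto_intros lim_exp_neg[OF \<open>0 < \<delta>\<close>])
  moreover have "exp k * exp (- (\<delta> * M)) * \<delta> = exp (k - M * \<delta>) * \<delta>" for M
    by (simp add: exp_diff exp_minus divide_inverse mult.commute)
  ultimately show ?thesis by simp
qed

lemma lim_gibbs_term: fixes \<delta> :: real assumes "0 \<le> \<delta>"
  shows "((\<lambda>M. (\<delta> * M) * exp (- (\<delta> * M))) \<longlongrightarrow> 0) at_top"
proof (cases "\<delta> = 0")
  case True then show ?thesis by simp
next
  case False
  then show ?thesis using assms lim_lin_exp_neg by simp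
qed

lemma energy_fam_low:
  assumes "i0 < d" "\<forall>j<d. eps i0 \<le> eps j" "eps i0 < E'"
  shows "\<exists>M\<ge>0. energy d eps (fam d eps p l M) < E'"
proof -
  have d: "0 < d" using assms by auto
  define c where "c = (\<lambda>i. l * ln (p i))"
  define h where "h = (\<lambda>M. \<Sum>j<d. exp (c j - c i0 - M * (eps j - eps i0)) * (eps j - eps i0))"
  have bound: "energy d eps (fam d eps p l M) - eps i0 \<le> h M" for M
  proof -
    let ?Z = "Zf d eps p l M"
    have Zp: "0 < ?Z" using Zf_pos[OF d] .
    have Zge: "exp (c i0 - M * eps i0) \<le> ?Z"
      unfolding Zf_def c_def using assms(1) by (intro member_le_sum) auto
    have "energy d eps (fam d eps p l M) - eps i0 = (\<Sum>j<d. fam d eps p l M j * (eps j - eps i0))"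
      using fam_sum[OF d, of eps p l M] unfolding energy_def
      by (simp add: right_diff_distrib sum_subtractf sum_distrib_right[symmetric])
    also have "\<dots> \<le> h M"
      unfolding h_def
    proof (rule sum_mono)
      fix j assume j: "j \<in> {..<d}"
      have "fam d eps p l M j = exp (c j - M * eps j) / ?Z" unfolding fam_def c_def by simp
      also have "\<dots> \<le> exp (c j - M * eps j) / exp (c i0 - M * eps i0)"
        using Zge Zp by (intro divide_left_mono) auto
      also have "\<dots> = exp (c j - c i0 - M * (eps j - eps i0))"
        by (simp add: exp_diff[symmetric] algebra_simps)
      finally show "fam d eps p l M j * (eps j - eps i0) \<le> exp (c j - c i0 - M * (eps j - eps i0)) * (eps j - eps i0)"
        using assms(2) j by (intro mult_right_mono) auto
    qed
    finally show ?thesis .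
  qed
  have "(h \<longlongrightarrow> 0) at_top"
    unfolding h_def using assms(2) by (intro tendsto_null_sum lim_exp_term) auto
  then have "eventually (\<lambda>M. h M < E' - eps i0) at_top"
    using assms(3) by (intro order_tendstoD) auto
  then obtain N where N: "\<And>M. M \<ge> N \<Longrightarrow> h M < E' - eps i0"
    unfolding eventually_at_top_linorder by auto
  show ?thesis
    using N[of "max N 0"] bound[of "max N 0"] by (intro exI[of _ "max N 0"]) auto
qed

lemma entropy_gibbs_low:
  assumes "i0 < d" "\<forall>j<d. j \<noteq> i0 \<longrightarrow> eps i0 < eps j" "0 < S"
  shows "\<exists>b\<ge>0. entropy d (fam d eps p 0 b) < S"
proof -
  have d: "0 < d" using assms by auto
  define \<delta> where "\<delta> = (\<lambda>j. eps j - eps i0)"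
  have \<delta>0: "\<And>j. j < d \<Longrightarrow> 0 \<le> \<delta> j" using assms(2) unfolding \<delta>_def by (metis less_eq_real_def diff_ge_0_iff_ge)
  have \<delta>i0: "\<delta> i0 = 0" unfolding \<delta>_def by simp
  define B where "B = (\<lambda>b. (\<Sum>j<d. (\<delta> j * b) * exp (- (\<delta> j * b))) + (\<Sum>j\<in>{..<d} - {i0}. exp (- (\<delta> j * b))))"
  have bound: "entropy d (fam d eps p 0 b) \<le> B b" if b: "0 \<le> b" for b
  proof -
    let ?Z = "Zf d eps p 0 b"
    have Zp: "0 < ?Z" using Zf_pos[OF d] .
    have Zdef: "?Z = (\<Sum>j<d. exp (- (b * eps j)))" unfolding Zf_def by simp
    have Zge: "exp (- (b * eps i0)) \<le> ?Z"
      unfolding Zdef using assms(1) by (intro member_le_sum) auto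
    have e1: "b * (energy d eps (fam d eps p 0 b) - eps i0) \<le> (\<Sum>j<d. (\<delta> j * b) * exp (- (\<delta> j * b)))"
    proof -
      have "energy d eps (fam d eps p 0 b) - eps i0 = (\<Sum>j<d. fam d eps p 0 b j * \<delta> j)"
        using fam_sum[OF d, of eps p 0 b] unfolding energy_def \<delta>_def
        by (simp add: right_diff_distrib sum_subtractf sum_distrib_right[symmetric])
      also have "\<dots> \<le> (\<Sum>j<d. exp (- (\<delta> j * b)) * \<delta> j)"
      proof (rule sum_mono)
        fix j assume j: "j \<in> {..<d}"
        have "fam d eps p 0 b j = exp (- (b * eps j)) / ?Z" unfolding fam_def by simp
        also have "\<dots> \<le> exp (- (b * eps j)) / exp (- (b * eps i0))"
          using Zge Zp by (intro divide_left_mono) auto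
        also have "\<dots> = exp (- (\<delta> j * b))"
          unfolding \<delta>_def by (simp add: exp_diff[symmetric] algebra_simps)
        finally show "fam d eps p 0 b j * \<delta> j \<le> exp (- (\<delta> j * b)) * \<delta> j"
          using \<delta>0 j by (intro mult_right_mono) auto
      qed
      finally have "b * (energy d eps (fam d eps p 0 b) - eps i0) \<le> b * (\<Sum>j<d. exp (- (\<delta> j * b)) * \<delta> j)"
        using b by (intro mult_left_mono) auto
      also have "\<dots> = (\<Sum>j<d. (\<delta> j * b) * exp (- (\<delta> j * b)))"
        by (simp add: sum_distrib_left mult_ac)
      finally show ?thesis .
    qed
    have e2: "ln ?Z + b * eps i0 \<le> (\<Sum>j\<in>{..<d} - {i0}. exp (- (\<delta> j * b)))"
    proof -
      have "ln ?Z + b * eps i0 = ln (?Z * exp (b * eps i0))" using Zp by (simp add: ln_mult)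
      also have "\<dots> \<le> ?Z * exp (b * eps i0) - 1" using Zp by (intro ln_le_minus_one) auto
      also have "?Z * exp (b * eps i0) = (\<Sum>j<d. exp (- (\<delta> j * b)))"
        unfolding Zdef \<delta>_def sum_distrib_right by (intro sum.cong refl) (simp add: exp_add[symmetric] algebra_simps)
      also have "\<dots> = exp (- (\<delta> i0 * b)) + (\<Sum>j\<in>{..<d} - {i0}. exp (- (\<delta> j * b)))"
        using assms(1) by (subst sum.remove[of _ i0]) auto
      finally show ?thesis using \<delta>i0 by simp
    qed
    have "entropy d (fam d eps p 0 b) = b * energy d eps (fam d eps p 0 b) + ln ?Z"
      using entropy_gibbs_fam[OF d] .
    also have "\<dots> = b * (energy d eps (fam d eps p 0 b) - eps i0) + (ln ?Z + b * eps i0)"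
      by (simp add: algebra_simps)
    also have "\<dots> \<le> B b" unfolding B_def using e1 e2 by simp
    finally show ?thesis .
  qed
  have "(B \<longlongrightarrow> 0 + 0) at_top"
    unfolding B_def
  proof (intro tendsto_add tendsto_null_sum)
    fix j assume "j \<in> {..<d}"
    then show "((\<lambda>b. (\<delta> j * b) * exp (- (\<delta> j * b))) \<longlongrightarrow> 0) at_top"
      using \<delta>0 by (intro lim_gibbs_term) auto
  next
    fix j assume "j \<in> {..<d} - {i0}"
    then have "0 < \<delta> j" using assms(2) unfolding \<delta>_def by auto
    then show "((\<lambda>b. exp (- (\<delta> j * b))) \<longlongrightarrow> 0) at_top" by (rule lim_exp_neg)
  qed
  then have "eventually (\<lambda>b. B b < S) at_top"
    using assms(3) by (intro order_tendstoD) auto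
  then obtain N where N: "\<And>b. b \<ge> N \<Longrightarrow> B b < S"
    unfolding eventually_at_top_linorder by auto
  show ?thesis
    using N[of "max N 0"] bound[of "max N 0"] by (intro exI[of _ "max N 0"]) auto
qed

lemma cont_energy_fam:
  assumes "continuous_on T L" "continuous_on T M"
  shows "continuous_on T (\<lambda>t. energy d eps (fam d eps p (L t) (M t)))"
proof (cases "d = 0")
  case True then show ?thesis by (simp add: energy_def)
next
  case False
  have "(\<Sum>i<d. exp (L t * ln (p i) - M t * eps i)) \<noteq> 0" for t
    using False by (intro order.strict_implies_not_eq[symmetric] sum_pos) auto
  then show ?thesis unfolding energy_fam using assms by (intro continuous_intros) auto
qed

lemma cont_entropy_fam:
  assumes "continuous_on T L" "continuous_on T M" "0 < d"
  shows "continuous_on T (\<lambda>t. entropy d (fam d eps p (L t) (M t)))"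
proof -
  have Zc: "continuous_on T (\<lambda>t. Zf d eps p (L t) (M t))"
    unfolding Zf_def using assms by (intro continuous_intros)
  have Zp: "\<And>t. Zf d eps p (L t) (M t) \<noteq> 0" using Zf_pos[OF assms(3)] by (metis less_irrefl)
  have fc: "continuous_on T (\<lambda>t. fam d eps p (L t) (M t) i)" for i
    unfolding fam_def using assms Zc Zp by (intro continuous_intros) auto
  have "continuous_on T (\<lambda>t. M t * energy d eps (fam d eps p (L t) (M t))
     - L t * (\<Sum>i<d. fam d eps p (L t) (M t) i * ln (p i)) + ln (Zf d eps p (L t) (M t)))"
    using assms Zc fc Zp cont_energy_fam[OF assms(1,2)]
    by (intro continuous_intros) auto
  then show ?thesis using entropy_fam[OF assms(3)] by simp
qed

lemma cont_energy_m: "continuous_on T (\<lambda>m. energy d eps (fam d eps p l m))"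
  using cont_energy_fam[of T "\<lambda>_. l" "\<lambda>m. m"] by (simp add: continuous_on_const continuous_on_id)

lemma cont_energy_l: "continuous_on T (\<lambda>l. energy d eps (fam d eps p l m))"
  using cont_energy_fam[of T "\<lambda>l. l" "\<lambda>_. m"] by (simp add: continuous_on_const continuous_on_id)

context
  fixes d :: nat and eps p :: "nat \<Rightarrow> real" and E' :: real
  assumes P: "full_rank_passive d eps p" and d2: "2 \<le> d" and nd: "nondegenerate d eps"
    and low: "\<exists>i0<d. (\<forall>j<d. eps i0 \<le> eps j) \<and> eps i0 < E'" and hi: "E' \<le> energy d eps p"
begin

definition mu :: "real \<Rightarrow> real" where
  "mu l = (THE m. energy d eps (fam d eps p l m) = E')"

lemma mu_ex: assumes "0 \<le> l" "l \<le> 1" shows "\<exists>m\<ge>0. energy d eps (fam d eps p l m) = E'"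
proof -
  have p: "\<forall>i<d. 0 < p i" "(\<Sum>i<d. p i) = 1" using P unfolding full_rank_passive_def by auto
  obtain i0 where i0: "i0 < d" "\<forall>j<d. eps i0 \<le> eps j" "eps i0 < E'" using low by auto
  obtain M where M: "M \<ge> 0" "energy d eps (fam d eps p l M) < E'"
    using energy_fam_low[OF i0] by auto
  have "E' \<le> energy d eps (fam d eps p 1 0)" using hi fam_1_0_eq[OF p] by simp
  also have "\<dots> \<le> energy d eps (fam d eps p l 0)" using energy_fam_mono_l[OF P assms(2)] .
  finally have "E' \<le> energy d eps (fam d eps p l 0)" .
  then obtain m where "0 \<le> m" "m \<le> M" "energy d eps (fam d eps p l m) = E'"
    using IVT2'[of "\<lambda>m. energy d eps (fam d eps p l m)" M E' 0] M cont_energy_m by auto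
  then show ?thesis by auto
qed

lemma mu_uniq:
  assumes "energy d eps (fam d eps p l m1) = E'" "energy d eps (fam d eps p l m2) = E'"
  shows "m1 = m2"
proof (rule ccontr)
  assume "m1 \<noteq> m2"
  then consider "m1 < m2" | "m2 < m1" by linarith
  then show False
  proof cases
    case 1 then show False using energy_fam_strict_m[OF 1 d2 nd, where l=l and p=p] assms by simp
  next
    case 2 then show False using energy_fam_strict_m[OF 2 d2 nd, where l=l and p=p] assms by simp
  qed
qed

lemma mu_prop: assumes "0 \<le> l" "l \<le> 1"
  shows "energy d eps (fam d eps p l (mu l)) = E'" "0 \<le> mu l"
proof -
  obtain m where m: "m \<ge> 0" "energy d eps (fam d eps p l m) = E'" using mu_ex[OF assms] by auto
  have "mu l = m" unfolding mu_def using m mu_uniq by (intro the_equality) auto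
  then show "energy d eps (fam d eps p l (mu l)) = E'" "0 \<le> mu l" using m by auto
qed

lemma mu_cont: "continuous_on {0..1} mu"
  unfolding continuous_on_def
proof (intro ballI)
  fix x :: real assume x: "x \<in> {0..1}"
  show "(mu \<longlongrightarrow> mu x) (at x within {0..1})"
  proof (rule tendstoI)
    fix e :: real assume e: "0 < e"
    define F1 where "F1 = (\<lambda>y. energy d eps (fam d eps p y (mu x - e)))"
    define F2 where "F2 = (\<lambda>y. energy d eps (fam d eps p y (mu x + e)))"
    have Ex: "energy d eps (fam d eps p x (mu x)) = E'" using mu_prop x by auto
    have F1x: "E' < F1 x" unfolding F1_def using energy_fam_strict_m[of "mu x - e" "mu x", OF _ d2 nd, where l=x and p=p] e Ex by simp
    have F2x: "F2 x < E'" unfolding F2_def using energy_fam_strict_m[of "mu x" "mu x + e", OF _ d2 nd, where l=x and p=p] e Ex by simp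
    have c1: "(F1 \<longlongrightarrow> F1 x) (at x within {0..1})"
    proof -
      have "continuous_on UNIV F1" unfolding F1_def by (rule cont_energy_l)
      then have "(F1 \<longlongrightarrow> F1 x) (at x within UNIV)" unfolding continuous_on_def by blast
      then show ?thesis by (rule tendsto_within_subset) simp
    qed
    have c2: "(F2 \<longlongrightarrow> F2 x) (at x within {0..1})"
    proof -
      have "continuous_on UNIV F2" unfolding F2_def by (rule cont_energy_l)
      then have "(F2 \<longlongrightarrow> F2 x) (at x within UNIV)" unfolding continuous_on_def by blast
      then show ?thesis by (rule tendsto_within_subset) simp
    qed
    have ev1: "eventually (\<lambda>y. E' < F1 y) (at x within {0..1})"
      using order_tendstoD(1)[OF c1 F1x] .
    have ev2: "eventually (\<lambda>y. F2 y < E') (at x within {0..1})"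
      using order_tendstoD(2)[OF c2 F2x] .
    have ev3: "eventually (\<lambda>y. y \<in> {0..1}) (at x within {0..1})"
      by (simp add: eventually_at_filter)
    show "eventually (\<lambda>y. dist (mu y) (mu x) < e) (at x within {0..1})"
      using ev1 ev2 ev3
    proof eventually_elim
      case (elim y)
      then have Ey: "energy d eps (fam d eps p y (mu y)) = E'" using mu_prop by auto
      have a: "mu x - e < mu y"
      proof (rule ccontr)
        assume "\<not> mu x - e < mu y"
        then have "energy d eps (fam d eps p y (mu x - e)) \<le> energy d eps (fam d eps p y (mu y))"
          by (intro energy_fam_mono_m) auto
        then show False using elim Ey unfolding F1_def by simp
      qed
      have b: "mu y < mu x + e"
      proof (rule ccontr)
        assume "\<not> mu y < mu x + e"
        then have "energy d eps (fam d eps p y (mu y)) \<le> energy d eps (fam d eps p y (mu x + e))"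
          by (intro energy_fam_mono_m) auto
        then show False using elim Ey unfolding F2_def by simp
      qed
      show ?case using a b by (simp add: dist_real_def abs_less_iff)
    qed
  qed
qed

end

lemma exists_min_index:
  fixes d :: nat and eps :: "nat \<Rightarrow> real"
  assumes "0 < d"
  shows "\<exists>i0<d. \<forall>j<d. eps i0 \<le> eps j"
proof -
  let ?m = "Min (eps ` {..<d})"
  have "?m \<in> eps ` {..<d}" using assms by (intro Min_in finite_imageI) auto
  then obtain i0 where "i0 < d" "eps i0 = ?m" by auto
  then show ?thesis by (intro exI[of _ i0]) auto
qed

lemma passive_energy_above_min:
  assumes "full_rank_passive d eps r" "2 \<le> d" "nondegenerate d eps" "i0 < d" "\<forall>j<d. eps i0 \<le> eps j"
  shows "eps i0 < energy d eps r"
proof -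
  have r: "\<forall>i<d. 0 < r i" "(\<Sum>i<d. r i) = 1" using assms(1) unfolding full_rank_passive_def by auto
  obtain j where j: "j < d" "j \<noteq> i0" using assms(2,4) by (metis One_nat_def Suc_1 Suc_le_lessD less_Suc_eq not_less_eq zero_less_Suc nat_neq_iff)
  have "eps j \<noteq> eps i0" using assms(3,4) j unfolding nondegenerate_def inj_on_def by auto
  then have ej: "eps i0 < eps j" using assms(5) j by (simp add: order_le_neq_trans)
  have "0 < (\<Sum>k<d. r k * (eps k - eps i0))"
  proof (rule sum_pos2[where i=j])
    show "0 < r j * (eps j - eps i0)" using r j ej by simp
    show "0 \<le> r k * (eps k - eps i0)" if "k \<in> {..<d}" for k using r assms(5) that by (intro mult_nonneg_nonneg) (auto simp: less_imp_le)
  qed (use j in auto)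
  also have "\<dots> = energy d eps r - eps i0"
    using r unfolding energy_def by (simp add: right_diff_distrib sum_subtractf sum_distrib_left[symmetric] mult.commute)
  finally show ?thesis by simp
qed

lemma cover:
  assumes P: "full_rank_passive d eps p" and R: "full_rank_passive d eps r"
    and d2: "2 \<le> d" and nd: "nondegenerate d eps"
    and E: "energy d eps r \<le> energy d eps p" and S: "entropy d p \<le> entropy d r"
  shows "\<exists>l m. 0 \<le> l \<and> l \<le> 1 \<and> 0 \<le> m \<and> energy d eps (fam d eps p l m) = energy d eps r
      \<and> entropy d (fam d eps p l m) = entropy d r"
proof -
  have d: "0 < d" using d2 by simp
  have r: "\<forall>i<d. 0 < r i" "(\<Sum>i<d. r i) = 1" using R unfolding full_rank_passive_def by auto
  obtain i0 where i0: "i0 < d" "\<forall>j<d. eps i0 \<le> eps j" using exists_min_index[OF d] by blast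
  have low: "\<exists>i0<d. (\<forall>j<d. eps i0 \<le> eps j) \<and> eps i0 < energy d eps r"
    using i0 passive_energy_above_min[OF R d2 nd i0] by blast
  note mp = mu_prop[OF P d2 nd low E]
  let ?mu = "mu d eps p (energy d eps r)"
  define g where "g = (\<lambda>l. entropy d (fam d eps p l (?mu l)))"
  have gc: "continuous_on {0..1} g"
    unfolding g_def using mu_cont[OF P d2 nd low E] d
    by (intro cont_entropy_fam continuous_on_id) auto
  have g1: "g 1 \<le> entropy d r"
    unfolding g_def using entropy_cool_le[OF P] mp(2)[of 1] S by fastforce
  have g0: "entropy d r \<le> g 0"
    unfolding g_def using max_entropy_gibbs[OF r] mp(1)[of 0] by simp
  obtain l where l: "0 \<le> l" "l \<le> 1" "g l = entropy d r"
    using IVT2'[OF g1 g0 _ gc] by auto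
  show ?thesis
    using l mp[of l] unfolding g_def by (intro exI[of _ l] exI[of _ "?mu l"]) auto
qed

lemma emeasure_lborel_lebesgue:
  fixes A :: "real set"
  assumes "A \<in> sets lborel"
  shows "emeasure lborel A = emeasure lebesgue A"
  using assms by simp

lemma shear_emeasure:
  fixes K :: "(real \<times> real) set" and l m c :: real
  assumes K: "compact K" and l: "0 \<le> l" "l \<le> 1"
  shows "emeasure lborel ((\<lambda>(x, y). (x, l * y + m * x + c)) ` K) \<le> emeasure lborel K"
proof -
  define T where "T = (\<lambda>(x::real, y::real). (x, l * y + m * x + c))"
  have Tc: "continuous_on UNIV T" unfolding T_def case_prod_unfold by (intro continuous_intros)
  have TK: "compact (T ` K)" using compact_continuous_image[OF continuous_on_subset[OF Tc subset_UNIV] K] .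
  have Ks: "K \<in> sets (lborel \<Otimes>\<^sub>M lborel)" unfolding lborel_prod using borel_compact[OF K] by simp
  have TKs: "T ` K \<in> sets (lborel \<Otimes>\<^sub>M lborel)" unfolding lborel_prod using borel_compact[OF TK] by simp
  have slice: "Pair x -` (T ` K) = (\<lambda>y. l *\<^sub>R y + (m * x + c)) ` (Pair x -` K)" for x
  proof
    show "Pair x -` (T ` K) \<subseteq> (\<lambda>y. l *\<^sub>R y + (m * x + c)) ` (Pair x -` K)"
      unfolding T_def by (auto simp: image_iff)
    show "(\<lambda>y. l *\<^sub>R y + (m * x + c)) ` (Pair x -` K) \<subseteq> Pair x -` (T ` K)"
    proof
      fix z assume "z \<in> (\<lambda>y. l *\<^sub>R y + (m * x + c)) ` (Pair x -` K)"
      then obtain b where b: "(x, b) \<in> K" "z = l * b + (m * x + c)" by auto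
      then have "(x, z) = T (x, b)" unfolding T_def by simp
      then show "z \<in> Pair x -` (T ` K)" using b(1) by blast
    qed
  qed
  have pw: "emeasure lborel (Pair x -` (T ` K)) \<le> emeasure lborel (Pair x -` K)" for x
  proof -
    have A1: "Pair x -` K \<in> sets lborel" using sets_Pair1[OF Ks] .
    have A2: "Pair x -` (T ` K) \<in> sets lborel" using sets_Pair1[OF TKs] .
    have "emeasure lborel (Pair x -` (T ` K)) = emeasure lebesgue ((\<lambda>y. l *\<^sub>R y + (m * x + c)) ` (Pair x -` K))"
      using emeasure_lborel_lebesgue[OF A2] slice by simp
    also have "\<dots> = ennreal (\<bar>l\<bar> ^ DIM(real)) * emeasure lebesgue (Pair x -` K)"
      by (rule emeasure_lebesgue_affine)
    also have "\<dots> = ennreal l * emeasure lborel (Pair x -` K)"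
      using emeasure_lborel_lebesgue[OF A1] l by simp
    also have "\<dots> \<le> 1 * emeasure lborel (Pair x -` K)"
      using l by (intro mult_right_mono) auto
    finally show ?thesis by simp
  qed
  have "emeasure lborel (T ` K) = emeasure (lborel \<Otimes>\<^sub>M lborel) (T ` K)" by (simp add: lborel_prod)
  also have "\<dots> = (\<integral>\<^sup>+x. emeasure lborel (Pair x -` (T ` K)) \<partial>lborel)"
    by (rule lborel.emeasure_pair_measure_alt[OF TKs])
  also have "\<dots> \<le> (\<integral>\<^sup>+x. emeasure lborel (Pair x -` K) \<partial>lborel)"
    by (intro nn_integral_mono pw)
  also have "\<dots> = emeasure (lborel \<Otimes>\<^sub>M lborel) K"
    by (rule lborel.emeasure_pair_measure_alt[OF Ks, symmetric])
  also have "\<dots> = emeasure lborel K" by (simp add: lborel_prod)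
  finally show ?thesis unfolding T_def .
qed

lemma measure_le_from_emeasure:
  assumes "emeasure lborel A \<le> emeasure lborel B" "emeasure lborel B < \<infinity>"
  shows "measure lborel A \<le> measure lborel B"
  using assms unfolding measure_def by (intro enn2real_mono) auto

lemma hull_area_fam_le:
  assumes d: "0 < d" and p: "\<forall>i<d. 0 < p i" and l: "0 \<le> l" "l \<le> 1"
  shows "hull_area d eps (fam d eps p l m) \<le> hull_area d eps p"
proof -
  define c where "c = ln (Zf d eps p l m)"
  define T where "T = (\<lambda>(x::real, y::real). (x, l * y + m * x + c))"
  define L where "L = (\<lambda>(x::real, y::real). (x, l * y + m * x))"
  define P where "P = eps_s_ensemble d eps p"
  have ens: "eps_s_ensemble d eps (fam d eps p l m) = T ` P"
    unfolding eps_s_ensemble_def P_def T_def c_def image_image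
    by (intro image_cong refl) (simp add: ln_fam[OF d] algebra_simps)
  have linL: "linear L"
    unfolding L_def by (intro linearI) (auto simp: algebra_simps case_prod_unfold)
  have TL: "T ` S = (+) (0, c) ` (L ` S)" for S
    unfolding T_def L_def image_image by (intro image_cong refl) (auto simp: case_prod_unfold)
  have Pf: "finite P" unfolding P_def eps_s_ensemble_def by simp
  have K: "compact (convex hull P)" by (rule finite_imp_compact_convex_hull[OF Pf])
  have cvx: "convex (T ` (convex hull P))"
    unfolding TL by (intro convex_translation convex_linear_image[OF linL] convex_convex_hull)
  have sub: "convex hull (T ` P) \<subseteq> T ` (convex hull P)"
    by (intro hull_minimal cvx image_mono hull_subset)
  have Tc: "continuous_on UNIV T" unfolding T_def case_prod_unfold by (intro continuous_intros)
  have TK: "compact (T ` (convex hull P))" using compact_continuous_image[OF continuous_on_subset[OF Tc subset_UNIV] K] .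
  have fin: "emeasure lborel (convex hull P) < \<infinity>"
    using emeasure_bounded_finite compact_imp_bounded K by blast
  have "emeasure lborel (convex hull (T ` P)) \<le> emeasure lborel (T ` (convex hull P))"
    using sub borel_compact[OF TK] by (intro emeasure_mono) auto
  also have "\<dots> \<le> emeasure lborel (convex hull P)"
    unfolding T_def by (rule shear_emeasure[OF K l])
  finally have "emeasure lborel (convex hull (T ` P)) \<le> emeasure lborel (convex hull P)" .
  then show ?thesis
    unfolding hull_area_def ens P_def[symmetric] using fin by (intro measure_le_from_emeasure) auto
qed

lemma gibbs_energy_strict:
  assumes "b1 < b2" "2 \<le> d" "nondegenerate d eps"
  shows "energy d eps (gibbs d eps b2) < energy d eps (gibbs d eps b1)"
  unfolding gibbs_fam[of d eps _ "\<lambda>_. 1"] using energy_fam_strict_m[OF assms] .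

lemma gibbs_energy_mono:
  assumes "b1 \<le> b2"
  shows "energy d eps (gibbs d eps b2) \<le> energy d eps (gibbs d eps b1)"
  unfolding gibbs_fam[of d eps _ "\<lambda>_. 1"] using energy_fam_mono_m[OF assms] .

lemma gibbs_entropy_strict:
  assumes "0 \<le> b1" "b1 < b2" "2 \<le> d" "nondegenerate d eps"
  shows "entropy d (gibbs d eps b2) < entropy d (gibbs d eps b1)"
  unfolding gibbs_fam[of d eps _ "\<lambda>_. 1"] using entropy_gibbs_strict[OF assms] .

lemma passive_basic:
  assumes "full_rank_passive d eps r"
  shows "\<forall>i<d. 0 < r i" "(\<Sum>i<d. r i) = 1" "0 < d"
  using assms unfolding full_rank_passive_def by (auto intro: Nat.gr0I)

lemma beta_min_prop:
  assumes R: "full_rank_passive d eps r" and d2: "2 \<le> d" and nd: "nondegenerate d eps"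
  shows "0 \<le> beta_min d eps (energy d eps r) \<and> energy d eps (gibbs d eps (beta_min d eps (energy d eps r))) = energy d eps r"
proof -
  have d: "0 < d" using d2 by simp
  obtain i0 where i0: "i0 < d" "\<forall>j<d. eps i0 \<le> eps j" using exists_min_index[OF d] by blast
  have low: "\<exists>i0<d. (\<forall>j<d. eps i0 \<le> eps j) \<and> eps i0 < energy d eps r"
    using i0 passive_energy_above_min[OF R d2 nd i0] by blast
  note mp = mu_prop[OF R d2 nd low order_refl, of 0]
  let ?m = "mu d eps r (energy d eps r) 0"
  have g: "energy d eps (gibbs d eps ?m) = energy d eps r" using mp gibbs_fam[of d eps ?m r] by simp
  have "beta_min d eps (energy d eps r) = ?m"
    unfolding beta_min_def
  proof (rule the_equality)
    show "0 \<le> ?m \<and> energy d eps (gibbs d eps ?m) = energy d eps r" using mp g by simp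
    fix b assume b: "0 \<le> b \<and> energy d eps (gibbs d eps b) = energy d eps r"
    show "b = ?m"
    proof (rule ccontr)
      assume "b \<noteq> ?m"
      then consider "b < ?m" | "?m < b" by linarith
      then show False
        by cases (use gibbs_energy_strict[OF _ d2 nd] b g in fastforce)+
    qed
  qed
  then show ?thesis using mp g by simp
qed

lemma entropy_pos:
  assumes R: "full_rank_passive d eps r" and d2: "2 \<le> d"
  shows "0 < entropy d r"
proof -
  note r = passive_basic[OF R]
  have lt1: "r i < 1" if i: "i < d" for i
  proof -
    obtain j where j: "j < d" "j \<noteq> i" using d2 i
      by (metis One_nat_def Suc_1 Suc_le_lessD less_Suc_eq not_less_eq zero_less_Suc nat_neq_iff)
    have "(\<Sum>k\<in>{i, j}. r k) \<le> (\<Sum>k<d. r k)"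
      using i j r by (intro sum_mono2) (auto simp: less_imp_le)
    then have "r i + r j \<le> 1" using j r by simp
    then show ?thesis using r j by auto
  qed
  have "0 < (\<Sum>i<d. - (r i * ln (r i)))"
  proof (rule sum_pos)
    fix i assume "i \<in> {..<d}"
    then have "0 < r i" "r i < 1" using r lt1 by auto
    then have "ln (r i) < 0" by simp
    then show "0 < - (r i * ln (r i))" using \<open>0 < r i\<close> by (simp add: mult_pos_neg)
  qed (use r in auto)
  then show ?thesis unfolding entropy_def by (simp add: sum_negf)
qed

lemma beta_max_prop:
  assumes R: "full_rank_passive d eps r" and d2: "2 \<le> d" and nd: "nondegenerate d eps"
  shows "0 \<le> beta_max d eps (entropy d r) \<and> entropy d (gibbs d eps (beta_max d eps (entropy d r))) = entropy d r"
proof -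
  have d: "0 < d" using d2 by simp
  note r = passive_basic[OF R]
  obtain i0 where i0: "i0 < d" "\<forall>j<d. eps i0 \<le> eps j" using exists_min_index[OF d] by blast
  have i0s: "\<forall>j<d. j \<noteq> i0 \<longrightarrow> eps i0 < eps j"
  proof (intro allI impI)
    fix j assume j: "j < d" "j \<noteq> i0"
    then have "eps j \<noteq> eps i0" using nd i0 unfolding nondegenerate_def inj_on_def by auto
    then show "eps i0 < eps j" using i0 j by (simp add: order_le_neq_trans)
  qed
  define s where "s = (\<lambda>b. entropy d (gibbs d eps b))"
  have s_fam: "s b = entropy d (fam d eps r 0 b)" for b unfolding s_def gibbs_fam[of d eps b r] ..
  obtain M where M: "0 \<le> M" "s M < entropy d r"
    using entropy_gibbs_low[OF i0(1) i0s entropy_pos[OF R d2], of r] s_fam by auto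
  have s0: "entropy d r \<le> s 0"
    unfolding s_fam using max_entropy[OF r(1,2), of 0 eps r] entropy_gibbs_fam[OF d, of eps r 0] by simp
  have sc: "continuous_on {0..M} s"
    unfolding s_fam using cont_entropy_fam[of "{0..M}" "\<lambda>_. 0" "\<lambda>b. b" d eps r] d
    by (simp add: continuous_on_const continuous_on_id)
  obtain b where b: "0 \<le> b" "b \<le> M" "s b = entropy d r"
    using IVT2'[of s M "entropy d r" 0] M s0 sc by auto
  have "beta_max d eps (entropy d r) = b"
    unfolding beta_max_def
  proof (rule the_equality)
    show "0 \<le> b \<and> entropy d (gibbs d eps b) = entropy d r" using b unfolding s_def by simp
    fix b' assume b': "0 \<le> b' \<and> entropy d (gibbs d eps b') = entropy d r"
    show "b' = b"
    proof (rule ccontr)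
      assume "b' \<noteq> b"
      then consider "b' < b" | "b < b'" by linarith
      then show False
        by cases (use gibbs_entropy_strict[OF _ _ d2 nd] b b' s_def in fastforce)+
    qed
  qed
  then show ?thesis using b unfolding s_def by simp
qed

lemma traj_mono:
  assumes T: "activation_trajectory d eps a b Ef Sf" and st: "a \<le> s" "s \<le> t" "t \<le> b"
  shows "Ef t \<le> Ef s" "Sf s \<le> Sf t"
proof -
  have D: "\<forall>x\<in>{a..b}. \<exists>uE uS. (Ef has_real_derivative uE) (at x within {a..b}) \<and>
                          (Sf has_real_derivative uS) (at x within {a..b}) \<and> uE \<le> 0 \<and> 0 \<le> uS"
    using T unfolding activation_trajectory_def by blast
  have cE: "continuous_on {a..b} Ef" unfolding continuous_on_eq_continuous_within
    using D DERIV_continuous by blast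
  have cS: "continuous_on {a..b} Sf" unfolding continuous_on_eq_continuous_within
    using D DERIV_continuous by blast
  have int: "x \<in> {a..b}" "at x within {a..b} = at x" if "s < x" "x < t" for x
    using that st by (auto intro: at_within_Icc_at)
  show "Ef t \<le> Ef s"
  proof (rule DERIV_nonpos_imp_decreasing_open[OF st(2)])
    fix x assume "s < x" "x < t"
    then show "\<exists>y. (Ef has_real_derivative y) (at x) \<and> y \<le> 0" using D int by metis
  next
    show "continuous_on {s..t} Ef" using st by (intro continuous_on_subset[OF cE]) auto
  qed
  show "Sf s \<le> Sf t"
  proof (rule DERIV_nonneg_imp_increasing_open[OF st(2)])
    fix x assume "s < x" "x < t"
    then show "\<exists>y. (Sf has_real_derivative y) (at x) \<and> 0 \<le> y" using D int by metis
  next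
    show "continuous_on {s..t} Sf" using st by (intro continuous_on_subset[OF cS]) auto
  qed
qed

lemma key_2:
  assumes d2: "2 \<le> d" and nd: "nondegenerate d eps"
    and P: "full_rank_passive d eps p" and R: "full_rank_passive d eps r"
    and E: "energy d eps r \<le> energy d eps p" and S: "entropy d p \<le> entropy d r"
  shows "geom_athermality d eps (energy d eps r) (entropy d r) \<le> geom_athermality d eps (energy d eps p) (entropy d p)"
    "W_max d eps (energy d eps r) (entropy d r) \<le> W_max d eps (energy d eps p) (entropy d p)"
    "Delta_S_max d eps (energy d eps r) (entropy d r) \<le> Delta_S_max d eps (energy d eps p) (entropy d p)"
proof -
  show "geom_athermality d eps (energy d eps r) (entropy d r) \<le> geom_athermality d eps (energy d eps p) (entropy d p)"
    unfolding geom_athermality_def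
  proof (rule cInf_mono)
    show "{hull_area d eps q |q. full_rank_passive d eps q \<and> energy d eps q = energy d eps p \<and> entropy d q = entropy d p} \<noteq> {}"
      using P by auto
    show "bdd_below {hull_area d eps q |q. full_rank_passive d eps q \<and> energy d eps q = energy d eps r \<and> entropy d q = entropy d r}"
      unfolding hull_area_def by (rule bdd_belowI[of _ 0]) auto
    fix x assume "x \<in> {hull_area d eps q |q. full_rank_passive d eps q \<and> energy d eps q = energy d eps p \<and> entropy d q = entropy d p}"
    then obtain p' where p': "full_rank_passive d eps p'" "energy d eps p' = energy d eps p" "entropy d p' = entropy d p"
      "x = hull_area d eps p'" by auto
    obtain l m where lm: "0 \<le> l" "l \<le> 1" "0 \<le> m" "energy d eps (fam d eps p' l m) = energy d eps r"
      "entropy d (fam d eps p' l m) = entropy d r"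
      using cover[OF p'(1) R d2 nd] E S p' by auto
    have "hull_area d eps (fam d eps p' l m) \<le> x"
      using hull_area_fam_le[OF passive_basic(3)[OF p'(1)] passive_basic(1)[OF p'(1)] lm(1,2)] p'(4) by simp
    moreover have "full_rank_passive d eps (fam d eps p' l m)" using fam_passive[OF p'(1) lm(1,3)] .
    ultimately show "\<exists>a\<in>{hull_area d eps q |q. full_rank_passive d eps q \<and> energy d eps q = energy d eps r \<and> entropy d q = entropy d r}. a \<le> x"
      using lm by blast
  qed
  obtain br bp where br: "0 \<le> br" "entropy d (gibbs d eps br) = entropy d r" "beta_max d eps (entropy d r) = br"
    and bp: "0 \<le> bp" "entropy d (gibbs d eps bp) = entropy d p" "beta_max d eps (entropy d p) = bp"
    using beta_max_prop[OF R d2 nd] beta_max_prop[OF P d2 nd] by blast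
  have "br \<le> bp"
  proof (rule ccontr)
    assume "\<not> br \<le> bp"
    then have "entropy d (gibbs d eps br) < entropy d (gibbs d eps bp)"
      using gibbs_entropy_strict[OF bp(1) _ d2 nd] by simp
    then show False using br bp S by simp
  qed
  then have "energy d eps (gibbs d eps bp) \<le> energy d eps (gibbs d eps br)" by (rule gibbs_energy_mono)
  then show "W_max d eps (energy d eps r) (entropy d r) \<le> W_max d eps (energy d eps p) (entropy d p)"
    unfolding W_max_def using br bp E by simp
  obtain cr cp where cr: "0 \<le> cr" "energy d eps (gibbs d eps cr) = energy d eps r" "beta_min d eps (energy d eps r) = cr"
    and cp: "0 \<le> cp" "energy d eps (gibbs d eps cp) = energy d eps p" "beta_min d eps (energy d eps p) = cp"
    using beta_min_prop[OF R d2 nd] beta_min_prop[OF P d2 nd] by blast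
  have "cp \<le> cr"
  proof (rule ccontr)
    assume "\<not> cp \<le> cr"
    then have "energy d eps (gibbs d eps cp) < energy d eps (gibbs d eps cr)"
      using gibbs_energy_strict[OF _ d2 nd] by simp
    then show False using cr cp E by simp
  qed
  then have "entropy d (gibbs d eps cr) \<le> entropy d (gibbs d eps cp)"
    using gibbs_entropy_strict[OF cp(1) _ d2 nd, of cr] by (cases "cp = cr") auto
  then show "Delta_S_max d eps (energy d eps r) (entropy d r) \<le> Delta_S_max d eps (energy d eps p) (entropy d p)"
    unfolding Delta_S_max_def using cr cp S by simp
qed

lemma d1_passive:
  assumes "full_rank_passive d eps r" "d < 2"
  shows "energy d eps r = eps 0" "entropy d r = 0"
proof -
  note r = passive_basic[OF assms(1)]
  have d1: "d = 1" using r(3) assms(2) by simp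
  have "r 0 = 1" using r(2) d1 by simp
  then show "energy d eps r = eps 0" "entropy d r = 0" unfolding energy_def entropy_def using d1 by simp_all
qed

lemma key:
  assumes nd: "nondegenerate d eps" and T: "activation_trajectory d eps a b Ef Sf"
    and st: "a \<le> s" "s \<le> t" "t \<le> b"
  shows "geom_athermality d eps (Ef t) (Sf t) \<le> geom_athermality d eps (Ef s) (Sf s)
    \<and> W_max d eps (Ef t) (Sf t) \<le> W_max d eps (Ef s) (Sf s)
    \<and> Delta_S_max d eps (Ef t) (Sf t) \<le> Delta_S_max d eps (Ef s) (Sf s)"
proof -
  have reg: "\<forall>x\<in>{a..b}. (Ef x, Sf x) \<in> passive_region d eps"
    using T unfolding activation_trajectory_def by blast
  obtain p where p: "full_rank_passive d eps p" "Ef s = energy d eps p" "Sf s = entropy d p"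
    using reg st unfolding passive_region_def by fastforce
  obtain r where r: "full_rank_passive d eps r" "Ef t = energy d eps r" "Sf t = entropy d r"
    using reg st unfolding passive_region_def by fastforce
  note mono = traj_mono[OF T st]
  show ?thesis
  proof (cases "2 \<le> d")
    case True
    show ?thesis using key_2[OF True nd p(1) r(1)] mono p r by simp
  next
    case False
    then have "d < 2" by simp
    then show ?thesis using d1_passive[OF p(1)] d1_passive[OF r(1)] p r by simp
  qed
qed

theorem theorem5:
  fixes d :: nat and eps :: "nat \<Rightarrow> real" and a b :: real and Ef Sf :: "real \<Rightarrow> real"
  assumes "nondegenerate d eps"
    and "activation_trajectory d eps a b Ef Sf"
  shows "\<forall>s\<in>{a..b}. \<forall>t\<in>{a..b}.
           0 \<le> (geom_athermality d eps (Ef t) (Sf t) - geom_athermality d eps (Ef s) (Sf s))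
                * (W_max d eps (Ef t) (Sf t) - W_max d eps (Ef s) (Sf s))
         \<and> 0 \<le> (geom_athermality d eps (Ef t) (Sf t) - geom_athermality d eps (Ef s) (Sf s))
                * (Delta_S_max d eps (Ef t) (Sf t) - Delta_S_max d eps (Ef s) (Sf s))"
proof (intro ballI)
  fix s t assume s: "s \<in> {a..b}" and t: "t \<in> {a..b}"
  show "0 \<le> (geom_athermality d eps (Ef t) (Sf t) - geom_athermality d eps (Ef s) (Sf s))
                * (W_max d eps (Ef t) (Sf t) - W_max d eps (Ef s) (Sf s))
         \<and> 0 \<le> (geom_athermality d eps (Ef t) (Sf t) - geom_athermality d eps (Ef s) (Sf s))
                * (Delta_S_max d eps (Ef t) (Sf t) - Delta_S_max d eps (Ef s) (Sf s))"
  proof (cases "s \<le> t")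
    case True
    then have k: "geom_athermality d eps (Ef t) (Sf t) \<le> geom_athermality d eps (Ef s) (Sf s)
      \<and> W_max d eps (Ef t) (Sf t) \<le> W_max d eps (Ef s) (Sf s)
      \<and> Delta_S_max d eps (Ef t) (Sf t) \<le> Delta_S_max d eps (Ef s) (Sf s)"
      using key[OF assms] s t by auto
    then show ?thesis by (auto intro!: mult_nonpos_nonpos)
  next
    case False
    then have k: "geom_athermality d eps (Ef s) (Sf s) \<le> geom_athermality d eps (Ef t) (Sf t)
      \<and> W_max d eps (Ef s) (Sf s) \<le> W_max d eps (Ef t) (Sf t)
      \<and> Delta_S_max d eps (Ef s) (Sf s) \<le> Delta_S_max d eps (Ef t) (Sf t)"
      using key[OF assms, of t s] s t by auto
    then show ?thesis by (auto intro!: mult_nonneg_nonneg)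
  qed
qed

end
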